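(* For every countable group $G$ there is a proper left-invariant metric $d_G$ on $G$ such that $\operatorname{asdim}_{AN}(G,d_G)=\operatorname{asdim}(G)$.
   Context: For a countable group $G$, $\operatorname{asdim}(G)$ denotes $\operatorname{asdim}(G,d)$ for any proper left-invariant metric $d$ (it does not depend on the choice). A metric on $G$ is proper if bounded sets are finite, left-invariant if $d(gx,gy)=d(x,y)$. For a metric space $X$: $\operatorname{asdim}(X)\le n$ iff for every $r>0$ there are $D<\infty$ and families $\mathcal U_1,\dots,\mathcal U_{n+1}$ of subsets covering $X$, each $r$-disjoint (points in different members of the same family at distance $\ge r$), with members of diameter $\le D$; $\operatorname{asdim}_{AN}(X)\le n$ iff there are $b,c\ge0$ such that this holds with $D=cr+b$ for all $r>0$. *)

theory Defs
  imports "HOL-Algebra.Group" "HOL-Library.Extended_Nat" "HOL-Library.Countable_Set"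
begin

definition metric_on :: "'a set \<Rightarrow> ('a \<Rightarrow> 'a \<Rightarrow> real) \<Rightarrow> bool" where
  "metric_on X d \<longleftrightarrow>
     (\<forall>x\<in>X. \<forall>y\<in>X. 0 \<le> d x y \<and> (d x y = 0 \<longleftrightarrow> x = y) \<and> d x y = d y x) \<and>
     (\<forall>x\<in>X. \<forall>y\<in>X. \<forall>z\<in>X. d x z \<le> d x y + d y z)"

definition proper_metric_on :: "'a set \<Rightarrow> ('a \<Rightarrow> 'a \<Rightarrow> real) \<Rightarrow> bool" where
  "proper_metric_on X d \<longleftrightarrow> metric_on X d \<and>
     (\<forall>S\<subseteq>X. (\<exists>R. \<forall>x\<in>S. \<forall>y\<in>S. d x y \<le> R) \<longrightarrow> finite S)"

definition left_invariant :: "('a, 'b) monoid_scheme \<Rightarrow> ('a \<Rightarrow> 'a \<Rightarrow> real) \<Rightarrow> bool" where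
  "left_invariant G d \<longleftrightarrow>
     (\<forall>g\<in>carrier G. \<forall>x\<in>carrier G. \<forall>y\<in>carrier G. d (g \<otimes>\<^bsub>G\<^esub> x) (g \<otimes>\<^bsub>G\<^esub> y) = d x y)"

definition proper_li_metric :: "('a, 'b) monoid_scheme \<Rightarrow> ('a \<Rightarrow> 'a \<Rightarrow> real) \<Rightarrow> bool" where
  "proper_li_metric G d \<longleftrightarrow> proper_metric_on (carrier G) d \<and> left_invariant G d"

text \<open>U_1,...,U_{n+1} (indexed 0..n) cover X, each family r-disjoint, members of diameter <= D.\<close>
definition good_cover :: "'a set \<Rightarrow> ('a \<Rightarrow> 'a \<Rightarrow> real) \<Rightarrow> nat \<Rightarrow> real \<Rightarrow> real \<Rightarrow> (nat \<Rightarrow> 'a set set) \<Rightarrow> bool" where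
  "good_cover X d n r D U \<longleftrightarrow>
     (\<Union>i\<le>n. \<Union>(U i)) = X \<and>
     (\<forall>i\<le>n. \<forall>A\<in>U i. A \<subseteq> X \<and> (\<forall>x\<in>A. \<forall>y\<in>A. d x y \<le> D)) \<and>
     (\<forall>i\<le>n. \<forall>A\<in>U i. \<forall>B\<in>U i. A \<noteq> B \<longrightarrow> (\<forall>x\<in>A. \<forall>y\<in>B. r \<le> d x y))"

definition asdim_le :: "'a set \<Rightarrow> ('a \<Rightarrow> 'a \<Rightarrow> real) \<Rightarrow> nat \<Rightarrow> bool" where
  "asdim_le X d n \<longleftrightarrow> (\<forall>r>0. \<exists>D. \<exists>U. good_cover X d n r D U)"

definition asdimAN_le :: "'a set \<Rightarrow> ('a \<Rightarrow> 'a \<Rightarrow> real) \<Rightarrow> nat \<Rightarrow> bool" where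
  "asdimAN_le X d n \<longleftrightarrow>
     (\<exists>b c. 0 \<le> b \<and> 0 \<le> c \<and> (\<forall>r>0. \<exists>U. good_cover X d n r (c * r + b) U))"

text \<open>Dimensions as extended naturals (infinity if no finite n works).\<close>
definition asdim :: "'a set \<Rightarrow> ('a \<Rightarrow> 'a \<Rightarrow> real) \<Rightarrow> enat" where
  "asdim X d = Inf {enat n | n. asdim_le X d n}"

definition asdimAN :: "'a set \<Rightarrow> ('a \<Rightarrow> 'a \<Rightarrow> real) \<Rightarrow> enat" where
  "asdimAN X d = Inf {enat n | n. asdimAN_le X d n}"

text \<open>asdim of a countable group: asdim(G,d) for any proper left-invariant metric d
  (independent of the choice); we pick one by Hilbert choice.\<close>
definition asdim_group :: "('a, 'b) monoid_scheme \<Rightarrow> enat" where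
  "asdim_group G = asdim (carrier G) (SOME d. proper_li_metric G d)"

end

theory Submission
  imports Defs
begin


definition wt :: "('a, 'b) monoid_scheme \<Rightarrow> 'a \<Rightarrow> nat" where
  "wt G s = to_nat_on (carrier G) s + to_nat_on (carrier G) (inv\<^bsub>G\<^esub> s) + 1"

definition prodl :: "('a, 'b) monoid_scheme \<Rightarrow> 'a list \<Rightarrow> 'a" where
  "prodl G xs = foldr (\<lambda>x acc. x \<otimes>\<^bsub>G\<^esub> acc) xs \<one>\<^bsub>G\<^esub>"

definition wl :: "('a, 'b) monoid_scheme \<Rightarrow> 'a \<Rightarrow> nat" where
  "wl G g = (LEAST k. \<exists>xs. set xs \<subseteq> carrier G \<and> prodl G xs = g \<and> sum_list (map (wt G) xs) = k)"

context group begin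

lemma prodl_closed: "set xs \<subseteq> carrier G \<Longrightarrow> prodl G xs \<in> carrier G"
  by (induction xs) (auto simp: prodl_def)

lemma prodl_append: "set xs \<subseteq> carrier G \<Longrightarrow> set ys \<subseteq> carrier G \<Longrightarrow>
   prodl G (xs @ ys) = prodl G xs \<otimes> prodl G ys"
proof (induction xs)
  case Nil then show ?case using prodl_closed by (simp add: prodl_def)
next
  case (Cons a xs)
  then show ?case using prodl_closed[of xs] prodl_closed[of ys]
    by (simp add: prodl_def m_assoc)
qed

lemma prodl_inv: "set xs \<subseteq> carrier G \<Longrightarrow> prodl G (rev (map (m_inv G) xs)) = inv (prodl G xs)"
proof (induction xs)
  case Nil then show ?case by (simp add: prodl_def)
next
  case (Cons a xs)
  have "prodl G (rev (map (m_inv G) (a # xs))) = prodl G (rev (map (m_inv G) xs) @ [inv a])" by simp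
  also have "\<dots> = prodl G (rev (map (m_inv G) xs)) \<otimes> prodl G [inv a]"
    by (rule prodl_append) (use Cons in auto)
  also have "\<dots> = inv (prodl G xs) \<otimes> inv a" using Cons by (simp add: prodl_def)
  also have "\<dots> = inv (a \<otimes> prodl G xs)" using Cons prodl_closed[of xs]
    by (simp add: inv_mult_group)
  finally show ?case by (simp add: prodl_def)
qed

lemma wt_inv: "s \<in> carrier G \<Longrightarrow> wt G (inv s) = wt G s"
  by (simp add: wt_def)

lemma sum_wt_inv: "set xs \<subseteq> carrier G \<Longrightarrow>
  sum_list (map (wt G) (rev (map (m_inv G) xs))) = sum_list (map (wt G) xs)"
  by (induction xs) (auto simp: wt_inv)

lemma length_le_sum: "length xs \<le> sum_list (map (wt G) xs)"
  by (induction xs) (auto simp: wt_def)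

lemma wl_ex: "g \<in> carrier G \<Longrightarrow> \<exists>xs. set xs \<subseteq> carrier G \<and> prodl G xs = g \<and> sum_list (map (wt G) xs) = wl G g"
  unfolding wl_def
  by (rule LeastI_ex) (rule exI[of _ "sum_list (map (wt G) [g])"], rule exI[of _ "[g]"], simp add: prodl_def)

lemma wl_le: "set xs \<subseteq> carrier G \<Longrightarrow> wl G (prodl G xs) \<le> sum_list (map (wt G) xs)"
  unfolding wl_def by (rule Least_le) blast

lemma wl_one: "wl G \<one> = 0"
  using wl_le[of "[]"] by (simp add: prodl_def)

lemma wl_zero: "g \<in> carrier G \<Longrightarrow> wl G g = 0 \<Longrightarrow> g = \<one>"
proof -
  assume g: "g \<in> carrier G" and z: "wl G g = 0"
  obtain xs where xs: "set xs \<subseteq> carrier G" "prodl G xs = g" "sum_list (map (wt G) xs) = wl G g"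
    using wl_ex[OF g] by blast
  have "length xs \<le> 0" using length_le_sum[of xs] xs(3) z by linarith
  then have "xs = []" by simp
  then show ?thesis using xs by (simp add: prodl_def)
qed

lemma wl_mult: "g \<in> carrier G \<Longrightarrow> h \<in> carrier G \<Longrightarrow> wl G (g \<otimes> h) \<le> wl G g + wl G h"
proof -
  assume g: "g \<in> carrier G" and h: "h \<in> carrier G"
  obtain xs where xs: "set xs \<subseteq> carrier G" "prodl G xs = g" "sum_list (map (wt G) xs) = wl G g"
    using wl_ex[OF g] by blast
  obtain ys where ys: "set ys \<subseteq> carrier G" "prodl G ys = h" "sum_list (map (wt G) ys) = wl G h"
    using wl_ex[OF h] by blast
  have "wl G (prodl G (xs @ ys)) \<le> sum_list (map (wt G) (xs @ ys))"
    using xs ys by (intro wl_le) auto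
  then show ?thesis using xs ys prodl_append[of xs ys] by simp
qed

lemma wl_inv: "g \<in> carrier G \<Longrightarrow> wl G (inv g) \<le> wl G g"
proof -
  assume g: "g \<in> carrier G"
  obtain xs where xs: "set xs \<subseteq> carrier G" "prodl G xs = g" "sum_list (map (wt G) xs) = wl G g"
    using wl_ex[OF g] by blast
  have "wl G (prodl G (rev (map (m_inv G) xs))) \<le> sum_list (map (wt G) (rev (map (m_inv G) xs)))"
    using xs by (intro wl_le) auto
  then show ?thesis using xs prodl_inv[of xs] sum_wt_inv[of xs] by simp
qed

lemma wl_inv_eq: "g \<in> carrier G \<Longrightarrow> wl G (inv g) = wl G g"
  using wl_inv[of g] wl_inv[of "inv g"] by simp

lemma wl_finite:
  assumes "countable (carrier G)"
  shows "finite {g \<in> carrier G. wl G g \<le> R}"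
proof -
  let ?A = "{s \<in> carrier G. wt G s \<le> R}"
  have "to_nat_on (carrier G) ` ?A \<subseteq> {..R}" by (auto simp: wt_def)
  hence "finite (to_nat_on (carrier G) ` ?A)" by (rule finite_subset) simp
  moreover have "inj_on (to_nat_on (carrier G)) ?A"
    using inj_on_to_nat_on[OF assms] by (rule inj_on_subset) auto
  ultimately have fA: "finite ?A" by (rule finite_imageD)
  have "{g \<in> carrier G. wl G g \<le> R} \<subseteq> prodl G ` {xs. set xs \<subseteq> ?A \<and> length xs \<le> R}"
  proof
    fix g assume "g \<in> {g \<in> carrier G. wl G g \<le> R}"
    then have g: "g \<in> carrier G" "wl G g \<le> R" by auto
    obtain xs where xs: "set xs \<subseteq> carrier G" "prodl G xs = g" "sum_list (map (wt G) xs) = wl G g"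
      using wl_ex[OF g(1)] by blast
    have "\<forall>s\<in>set xs. wt G s \<le> sum_list (map (wt G) xs)"
      by (simp add: member_le_sum_list)
    then have "set xs \<subseteq> ?A" using xs g by fastforce
    moreover have "length xs \<le> R" using length_le_sum[of xs] xs g by simp
    ultimately show "g \<in> prodl G ` {xs. set xs \<subseteq> ?A \<and> length xs \<le> R}" using xs by blast
  qed
  moreover have "finite (prodl G ` {xs. set xs \<subseteq> ?A \<and> length xs \<le> R})"
    using finite_lists_length_le[OF fA] by blast
  ultimately show ?thesis by (rule finite_subset)
qed

lemma exists_metric:
  assumes cnt: "countable (carrier G)"
  shows "\<exists>d. proper_li_metric G d"
proof -
  define d where "d x y = real (wl G (inv x \<otimes> y))" for x y
  have met: "metric_on (carrier G) d"
    unfolding metric_on_def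
  proof (intro conjI ballI)
    fix x y assume x: "x \<in> carrier G" and y: "y \<in> carrier G"
    show "0 \<le> d x y" by (simp add: d_def)
    show "d x y = 0 \<longleftrightarrow> x = y"
    proof
      assume "d x y = 0"
      then have "inv x \<otimes> y = \<one>" using x y wl_zero by (simp add: d_def)
      then show "x = y" using x y by (metis inv_closed inv_inv inv_equality)
    next
      assume "x = y" then show "d x y = 0" using x by (simp add: d_def wl_one)
    qed
    have "inv (inv x \<otimes> y) = inv y \<otimes> x" using x y by (simp add: inv_mult_group)
    then show "d x y = d y x" using x y wl_inv_eq[of "inv x \<otimes> y"] by (simp add: d_def)
  next
    fix x y z assume x: "x \<in> carrier G" and y: "y \<in> carrier G" and z: "z \<in> carrier G"
    have "inv x \<otimes> z = (inv x \<otimes> y) \<otimes> (inv y \<otimes> z)" using x y z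
      by (simp add: m_assoc[symmetric]) (simp add: m_assoc r_inv)
    then show "d x z \<le> d x y + d y z" using x y z wl_mult[of "inv x \<otimes> y" "inv y \<otimes> z"]
      by (simp add: d_def)
  qed
  have prp: "proper_metric_on (carrier G) d"
    unfolding proper_metric_on_def
  proof (intro conjI met allI impI)
    fix S assume S: "S \<subseteq> carrier G" and "\<exists>R. \<forall>x\<in>S. \<forall>y\<in>S. d x y \<le> R"
    then obtain R where R: "\<forall>x\<in>S. \<forall>y\<in>S. d x y \<le> R" by blast
    show "finite S"
    proof (cases "S = {}")
      case False
      then obtain x0 where x0: "x0 \<in> S" by blast
      have "S \<subseteq> (\<lambda>h. x0 \<otimes> h) ` {g \<in> carrier G. wl G g \<le> nat \<lceil>R\<rceil>}"
      proof
        fix y assume y: "y \<in> S"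
        have "real (wl G (inv x0 \<otimes> y)) \<le> R" using R x0 y by (auto simp: d_def)
        then have "wl G (inv x0 \<otimes> y) \<le> nat \<lceil>R\<rceil>" by linarith
        moreover have "y = x0 \<otimes> (inv x0 \<otimes> y)" using x0 y S
          by (simp add: m_assoc[symmetric] subset_iff)
        ultimately show "y \<in> (\<lambda>h. x0 \<otimes> h) ` {g \<in> carrier G. wl G g \<le> nat \<lceil>R\<rceil>}"
          using x0 y S by blast
      qed
      then show ?thesis using wl_finite[OF cnt] finite_subset by blast
    qed simp
  qed
  have li: "left_invariant G d"
    unfolding left_invariant_def d_def
    by (auto simp: inv_mult_group m_assoc[symmetric]) (simp add: m_assoc)
  show ?thesis using prp li unfolding proper_li_metric_def by blast
qed

end



primrec Tseq :: "(real \<Rightarrow> real) \<Rightarrow> nat \<Rightarrow> real" where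
  "Tseq Df 0 = 1"
| "Tseq Df (Suc j) = max (2 * Tseq Df j) (Df (Tseq Df j + 1))"

definition Ncnt :: "(real \<Rightarrow> real) \<Rightarrow> real \<Rightarrow> nat" where
  "Ncnt Df t = card {k. Tseq Df k < t}"

definition phi :: "(real \<Rightarrow> real) \<Rightarrow> real \<Rightarrow> real" where
  "phi Df t = (if t \<le> 0 then 0 else 1 + real (Ncnt Df t))"

lemma T_ge: "Tseq Df j \<ge> real j + 1"
  by (induction j) auto

lemma T_Suc: "Tseq Df (Suc j) \<ge> 2 * Tseq Df j"
  by simp

lemma T_mono: "j \<le> k \<Longrightarrow> Tseq Df j \<le> Tseq Df k"
proof (induction k)
  case 0 then show ?case by simp
next
  case (Suc k)
  have "Tseq Df k \<le> Tseq Df (Suc k)" using T_Suc[of Df k] T_ge[of k Df] by linarith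
  then show ?case using Suc by (cases "j = Suc k") auto
qed

lemma N_fin: "finite {k. Tseq Df k < t}"
proof (rule finite_subset)
  show "{k. Tseq Df k < t} \<subseteq> {..< nat \<lceil>t\<rceil>}"
  proof
    fix k assume "k \<in> {k. Tseq Df k < t}"
    then have "real k + 1 < t" using T_ge[of k Df] by auto
    then show "k \<in> {..< nat \<lceil>t\<rceil>}" by (simp; linarith)
  qed
qed simp

lemma N_mono: "s \<le> t \<Longrightarrow> Ncnt Df s \<le> Ncnt Df t"
  unfolding Ncnt_def by (rule card_mono[OF N_fin]) auto

lemma N_lower: "Tseq Df j < t \<Longrightarrow> Suc j \<le> Ncnt Df t"
proof -
  assume a: "Tseq Df j < t"
  have "{..j} \<subseteq> {k. Tseq Df k < t}" using T_mono[of _ j Df] a by force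
  then have "card {..j} \<le> Ncnt Df t" unfolding Ncnt_def by (rule card_mono[OF N_fin])
  then show ?thesis by simp
qed

lemma N_upper: "t \<le> Tseq Df (Suc j) \<Longrightarrow> Ncnt Df t \<le> Suc j"
proof -
  assume a: "t \<le> Tseq Df (Suc j)"
  have "{k. Tseq Df k < t} \<subseteq> {..j}"
  proof
    fix k assume k: "k \<in> {k. Tseq Df k < t}"
    show "k \<in> {..j}"
    proof (rule ccontr)
      assume "k \<notin> {..j}"
      then have "Suc j \<le> k" by simp
      then have "Tseq Df (Suc j) \<le> Tseq Df k" by (rule T_mono)
      moreover have "Tseq Df k < t" using k by simp
      ultimately show False using a by linarith
    qed
  qed
  then have "Ncnt Df t \<le> card {..j}" unfolding Ncnt_def by (rule card_mono[rotated]) simp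
  then show ?thesis by simp
qed

lemma N_double: "Ncnt Df (2 * s) \<le> Ncnt Df s + 1"
proof -
  have "{k. Tseq Df k < 2 * s} \<subseteq> insert 0 (Suc ` {k. Tseq Df k < s})"
  proof
    fix k assume k: "k \<in> {k. Tseq Df k < 2 * s}"
    show "k \<in> insert 0 (Suc ` {k. Tseq Df k < s})"
    proof (cases k)
      case (Suc k')
      then have "Tseq Df k' < s" using k T_Suc[of Df k'] by simp
      then show ?thesis using Suc by blast
    qed simp
  qed
  then have "Ncnt Df (2 * s) \<le> card (insert 0 (Suc ` {k. Tseq Df k < s}))"
    unfolding Ncnt_def by (rule card_mono[rotated]) (simp add: N_fin)
  also have "\<dots> \<le> card (Suc ` {k. Tseq Df k < s}) + 1" by (simp add: card_insert_le_m1 card_insert_if)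
  also have "\<dots> = Ncnt Df s + 1" unfolding Ncnt_def by (simp add: card_image)
  finally show ?thesis .
qed

lemma phi_nonneg: "phi Df t \<ge> 0" by (simp add: phi_def)

lemma phi_mono: "s \<le> t \<Longrightarrow> phi Df s \<le> phi Df t"
  using N_mono[of s t Df] by (auto simp: phi_def)

lemma phi_sub: "0 \<le> s \<Longrightarrow> 0 \<le> t \<Longrightarrow> phi Df (s + t) \<le> phi Df s + phi Df t"
proof -
  assume s: "0 \<le> s" and t: "0 \<le> t"
  show ?thesis
  proof (cases "s = 0 \<or> t = 0")
    case True then show ?thesis using phi_nonneg[of Df] by auto
  next
    case False
    then have sp: "s > 0" "t > 0" using s t by auto
    define m where "m = max s t"
    have "Ncnt Df (s + t) \<le> Ncnt Df (2 * m)" by (rule N_mono) (simp add: m_def)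
    also have "\<dots> \<le> Ncnt Df m + 1" by (rule N_double)
    finally have "Ncnt Df (s + t) \<le> Ncnt Df m + 1" .
    moreover have "Ncnt Df m = Ncnt Df s \<or> Ncnt Df m = Ncnt Df t" by (simp add: m_def max_def)
    ultimately show ?thesis using sp by (auto simp: phi_def)
  qed
qed

lemma phi_big: "Tseq Df j < t \<Longrightarrow> phi Df t \<ge> real j + 2"
  using N_lower[of Df j t] T_ge[of j Df] by (auto simp: phi_def)

lemma phi_small: "t \<le> Tseq Df (Suc j) \<Longrightarrow> phi Df t \<le> real j + 2"
  using N_upper[of t Df j] by (auto simp: phi_def)

lemma enat_Inf_eq: "P n \<Longrightarrow> (\<And>m. P m \<Longrightarrow> n \<le> m) \<Longrightarrow> Inf {enat m | m. P m} = enat n"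
  by (rule antisym) (auto intro!: Inf_lower Inf_greatest)


lemma phi_metric: "metric_on X d \<Longrightarrow> metric_on X (\<lambda>x y. phi Df (d x y))"
  unfolding metric_on_def
proof (intro conjI ballI; elim conjE)
  fix x y assume m1: "\<forall>x\<in>X. \<forall>y\<in>X. 0 \<le> d x y \<and> (d x y = 0) = (x = y) \<and> d x y = d y x"
    and x: "x \<in> X" and y: "y \<in> X"
  have a: "0 \<le> d x y" "(d x y = 0) = (x = y)" "d x y = d y x" using m1 x y by blast+
  show "0 \<le> phi Df (d x y)" by (rule phi_nonneg)
  show "(phi Df (d x y) = 0) = (x = y)" using a(1,2) by (auto simp: phi_def) 
  show "phi Df (d x y) = phi Df (d y x)" using a(3) by (rule arg_cong)
next
  fix x y z assume m1: "\<forall>x\<in>X. \<forall>y\<in>X. 0 \<le> d x y \<and> (d x y = 0) = (x = y) \<and> d x y = d y x"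
    and m2: "\<forall>x\<in>X. \<forall>y\<in>X. \<forall>z\<in>X. d x z \<le> d x y + d y z"
    and x: "x \<in> X" and y: "y \<in> X" and z: "z \<in> X"
  have a: "d x z \<le> d x y + d y z" "0 \<le> d x y" "0 \<le> d y z" using m1 m2 x y z by blast+
  have "phi Df (d x z) \<le> phi Df (d x y + d y z)" using a(1) by (rule phi_mono)
  also have "\<dots> \<le> phi Df (d x y) + phi Df (d y z)" using a(2,3) by (rule phi_sub)
  finally show "phi Df (d x z) \<le> phi Df (d x y) + phi Df (d y z)" .
qed
lemma phi_proper: "proper_metric_on X d \<Longrightarrow> proper_metric_on X (\<lambda>x y. phi Df (d x y))"
  unfolding proper_metric_on_def
proof (intro conjI allI impI; elim conjE)
  assume "metric_on X d" then show "metric_on X (\<lambda>x y. phi Df (d x y))" by (rule phi_metric)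
next
  fix S assume pr: "\<forall>S\<subseteq>X. (\<exists>R. \<forall>x\<in>S. \<forall>y\<in>S. d x y \<le> R) \<longrightarrow> finite S"
    and S: "S \<subseteq> X" and "\<exists>R. \<forall>x\<in>S. \<forall>y\<in>S. phi Df (d x y) \<le> R"
  then obtain R where R: "\<forall>x\<in>S. \<forall>y\<in>S. phi Df (d x y) \<le> R" by blast
  have "\<forall>x\<in>S. \<forall>y\<in>S. d x y \<le> Tseq Df (nat \<lceil>R\<rceil>)"
  proof (intro ballI)
    fix x y assume "x \<in> S" "y \<in> S"
    then have "phi Df (d x y) \<le> R" using R by blast
    show "d x y \<le> Tseq Df (nat \<lceil>R\<rceil>)"
    proof (rule ccontr)
      assume "\<not> d x y \<le> Tseq Df (nat \<lceil>R\<rceil>)"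
      then have "real (nat \<lceil>R\<rceil>) + 2 \<le> phi Df (d x y)" by (intro phi_big) simp
      moreover have "R \<le> real (nat \<lceil>R\<rceil>)" by linarith
      ultimately show False using \<open>phi Df (d x y) \<le> R\<close> by linarith
    qed
  qed
  then show "finite S" using pr S by blast
qed


lemma good_cover_transfer:
  assumes U: "good_cover X d n r D U"
    and diam: "\<And>x y. x \<in> X \<Longrightarrow> y \<in> X \<Longrightarrow> d x y \<le> D \<Longrightarrow> d' x y \<le> D'"
    and sep: "\<And>x y. x \<in> X \<Longrightarrow> y \<in> X \<Longrightarrow> r \<le> d x y \<Longrightarrow> r' \<le> d' x y"
  shows "good_cover X d' n r' D' U"
proof -
  note all = U[unfolded good_cover_def]
  note c1 = conjunct1[OF all]
  note c2' = conjunct1[OF conjunct2[OF all]]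
  note c3' = conjunct2[OF conjunct2[OF all]]
  have c2: "\<And>i A. i \<le> n \<Longrightarrow> A \<in> U i \<Longrightarrow> A \<subseteq> X \<and> (\<forall>x\<in>A. \<forall>y\<in>A. d x y \<le> D)"
    using c2' by blast
  have c3: "\<And>i A B. i \<le> n \<Longrightarrow> A \<in> U i \<Longrightarrow> B \<in> U i \<Longrightarrow> A \<noteq> B \<Longrightarrow> (\<forall>x\<in>A. \<forall>y\<in>B. r \<le> d x y)"
    using c3' by blast
  show ?thesis unfolding good_cover_def
  proof (intro conjI allI impI ballI)
    show "(\<Union>i\<le>n. \<Union>(U i)) = X" by (rule c1)
  next
    fix i A assume "i \<le> n" "A \<in> U i"
    then show "A \<subseteq> X" using c2 by blast
  next
    fix i A x y assume i: "i \<le> n" and A: "A \<in> U i" and x: "x \<in> A" and y: "y \<in> A"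
    have "A \<subseteq> X" "d x y \<le> D" using c2[OF i A] x y by blast+
    then show "d' x y \<le> D'" using diam x y by blast
  next
    fix i A B x y assume i: "i \<le> n" and A: "A \<in> U i" and B: "B \<in> U i" and ne: "A \<noteq> B"
      and x: "x \<in> A" and y: "y \<in> B"
    have "A \<subseteq> X" "B \<subseteq> X" using c2[OF i A] c2[OF i B] by blast+
    moreover have "r \<le> d x y" using c3[OF i A B ne] x y by blast
    ultimately show "r' \<le> d' x y" using sep x y by blast
  qed
qed

lemma coarse1:
  assumes m: "metric_on X d" and a: "asdimAN_le X (\<lambda>x y. phi Df (d x y)) n"
  shows "asdim_le X d n"
  unfolding asdim_le_def
proof (intro allI impI)
  fix r :: real assume r: "r > 0"
  obtain b c where bc: "0 \<le> b" "0 \<le> c"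
    and cov: "\<forall>r>0. \<exists>U. good_cover X (\<lambda>x y. phi Df (d x y)) n r (c * r + b) U"
    using a unfolding asdimAN_le_def by blast
  define r' where "r' = phi Df r + 1"
  have "r' > 0" using phi_nonneg[of Df r] by (simp add: r'_def)
  then obtain U where U: "good_cover X (\<lambda>x y. phi Df (d x y)) n r' (c * r' + b) U"
    using cov by blast
  define j where "j = nat \<lceil>c * r' + b\<rceil>"
  have "good_cover X d n r (Tseq Df j) U"
  proof (rule good_cover_transfer[OF U])
    fix x y assume "phi Df (d x y) \<le> c * r' + b"
    moreover have "c * r' + b < real j + 2" unfolding j_def by linarith
    ultimately show "d x y \<le> Tseq Df j"
      using phi_big[of Df j "d x y"] by (cases "d x y \<le> Tseq Df j") auto
  next
    fix x y assume "r' \<le> phi Df (d x y)"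
    then show "r \<le> d x y" using phi_mono[of "d x y" r Df] by (cases "r \<le> d x y") (auto simp: r'_def)
  qed
  then show "\<exists>D U. good_cover X d n r D U" by blast
qed

lemma coarse2:
  assumes m: "metric_on X d" and a: "asdim_le X d n"
    and Df: "Df = (\<lambda>r. SOME D. \<exists>U. good_cover X d n r D U)"
  shows "asdimAN_le X (\<lambda>x y. phi Df (d x y)) n"
  unfolding asdimAN_le_def
proof (rule exI[of _ 3], rule exI[of _ 1], intro conjI allI impI)
  fix r' :: real assume r': "r' > 0"
  define j where "j = nat \<lceil>r'\<rceil>"
  define r where "r = Tseq Df j + 1"
  have "r > 0" using T_ge[of j Df] by (simp add: r_def)
  then have "\<exists>D U. good_cover X d n r D U" using a unfolding asdim_le_def by blast
  then have "\<exists>U. good_cover X d n r (Df r) U" unfolding Df by (rule someI_ex)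
  then obtain U where U: "good_cover X d n r (Df r) U" by blast
  have DfT: "Df r \<le> Tseq Df (Suc j)" by (simp add: r_def)
  have dpos: "x \<in> X \<Longrightarrow> y \<in> X \<Longrightarrow> 0 \<le> d x y" for x y using m unfolding metric_on_def by blast
  have "good_cover X (\<lambda>x y. phi Df (d x y)) n r' (1 * r' + 3) U"
  proof (rule good_cover_transfer[OF U])
    fix x y assume "x \<in> X" "y \<in> X" "d x y \<le> Df r"
    then have "phi Df (d x y) \<le> real j + 2" using DfT by (intro phi_small) linarith
    moreover have "real j \<le> r' + 1" unfolding j_def using r' by linarith
    ultimately show "phi Df (d x y) \<le> 1 * r' + 3" by linarith
  next
    fix x y assume "r \<le> d x y"
    then have "real j + 2 \<le> phi Df (d x y)" by (intro phi_big) (simp add: r_def)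
    moreover have "r' \<le> real j" unfolding j_def by linarith
    ultimately show "r' \<le> phi Df (d x y)" by linarith
  qed
  then show "\<exists>U. good_cover X (\<lambda>x y. phi Df (d x y)) n r' (1 * r' + 3) U" by blast
qed simp_all
theorem mainTheorem18:
  fixes G :: "('a, 'b) monoid_scheme"
  assumes "group G" and "countable (carrier G)"
  shows "\<exists>dG. proper_li_metric G dG \<and> asdimAN (carrier G) dG = asdim_group G"
proof -
  interpret group G by (rule assms(1))
  define d0 where "d0 = (SOME d. proper_li_metric G d)"
  have d0: "proper_li_metric G d0" unfolding d0_def
    using exists_metric[OF assms(2)] by (rule someI_ex)
  define X where "X = carrier G"
  define n0 where "n0 = (LEAST n. asdim_le X d0 n)"
  define Df where "Df = (\<lambda>r. SOME D. \<exists>U. good_cover X d0 n0 r D U)"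
  define dG where "dG = (\<lambda>x y. phi Df (d0 x y))"
  have pm: "proper_metric_on X d0" "left_invariant G d0" using d0 by (auto simp: proper_li_metric_def X_def)
  then have met: "metric_on X d0" by (simp add: proper_metric_on_def)
  have "proper_metric_on X dG" unfolding dG_def by (rule phi_proper[OF pm(1)])
  moreover have "left_invariant G dG" using pm(2) by (simp add: left_invariant_def dG_def)
  ultimately have pl: "proper_li_metric G dG" by (simp add: proper_li_metric_def X_def)
  have sub: "asdimAN_le X dG m \<Longrightarrow> asdim_le X d0 m" for m
    unfolding dG_def by (rule coarse1[OF met])
  have "asdimAN X dG = asdim X d0"
  proof (cases "\<exists>n. asdim_le X d0 n")
    case True
    then have n0: "asdim_le X d0 n0" unfolding n0_def by (rule LeastI_ex)
    have le: "asdim_le X d0 m \<Longrightarrow> n0 \<le> m" for m unfolding n0_def by (rule Least_le)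
    have "asdimAN_le X dG n0" unfolding dG_def by (rule coarse2[OF met n0 Df_def])
    then have "asdimAN X dG = enat n0" unfolding asdimAN_def
      by (rule enat_Inf_eq) (use sub le in blast)
    moreover have "asdim X d0 = enat n0" unfolding asdim_def
      by (rule enat_Inf_eq[where P="asdim_le X d0", OF n0 le])
    ultimately show ?thesis by simp
  next
    case False
    have e1: "{enat m | m. asdimAN_le X dG m} = {}" using False sub by blast
    have e2: "{enat m | m. asdim_le X d0 m} = {}" using False by blast
    show ?thesis unfolding asdimAN_def asdim_def e1 e2 by (rule refl)
  qed
  moreover have "asdim_group G = asdim X d0" unfolding asdim_group_def X_def d0_def by (rule refl)
  ultimately have "proper_li_metric G dG \<and> asdimAN (carrier G) dG = asdim_group G"
    using pl by (simp add: X_def)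
  then show ?thesis by (intro exI[of _ dG])
qed

end
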